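(* Let $C\in\mathbb{R}^{d\times d}$ be symmetric positive-definite, $\mu_0=\mathcal{N}(0,C)$, and let $\rho\colon\mathbb{R}^d\to(0,\infty)$ be measurable and bounded away from $0$ and from $\infty$ on every compact subset of $\mathbb{R}^d$. Let $E$ be the transition kernel of elliptical slice sampling for $(\rho,\mu_0)$. Then for every compact set $G\subset\mathbb{R}^d$ there is a constant $\varepsilon>0$ such that $$E(x,A)\ge\varepsilon\,\lambda_G(A)\qquad\text{for all }x\in G\text{ and all Borel }A\subseteq\mathbb{R}^d,$$ where $\lambda_G$ is $d$-dimensional Lebesgue measure restricted to $G$; that is, $G$ is a small set for $E$ with respect to the measure $\varepsilon\lambda_G$.
   Context: For $t\ge0$, $G_t=\{x\in\mathbb{R}^d:\rho(x)\ge t\}$. Let $p(x,w,\theta)=\cos(\theta)x+\sin(\theta)w$. Elliptical slice sampling performs one transition from $x$ as follows: draw $w\sim\mu_0$; draw $t\sim\mathcal{U}[0,\rho(x)]$; draw $\theta\sim\mathcal{U}[0,2\pi]$ and set $\theta_{\min}=\theta-2\pi$, $\theta_{\max}=\theta$; while $p(x,w,\theta)\notin G_t$: if $\theta<0$ set $\theta_{\min}=\theta$, else set $\theta_{\max}=\theta$, and draw a new $\theta\sim\mathcal{U}[\theta_{\min},\theta_{\max}]$; output $y=p(x,w,\theta)$. All draws are independent; $E(x,A)$ is the probability that the output lies in $A$. A set $S$ is small w.r.t. a kernel $P$ and a measure $\nu$ if $P(x,A)\ge\nu(A)$ for all $x\in S$ and Borel $A$. *)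

theory Defs
  imports "HOL-Probability.Probability"
begin

text \<open>Points of R^d are vectors of type real^'d (d = CARD('d)).\<close>

definition sym_pos_def_mat :: "real^'d^'d \<Rightarrow> bool" where
  "sym_pos_def_mat C \<longleftrightarrow> transpose C = C \<and> (\<forall>v. v \<noteq> 0 \<longrightarrow> v \<bullet> (C *v v) > 0)"

definition gauss_density :: "real^'d^'d \<Rightarrow> real^'d \<Rightarrow> real" where
  "gauss_density C x =
     (2 * pi) powr (- real CARD('d) / 2) * (det C) powr (- 1 / 2)
       * exp (- (x \<bullet> (matrix_inv C *v x)) / 2)"

definition gauss_measure :: "real^'d^'d \<Rightarrow> (real^'d) measure" where
  "gauss_measure C = density lborel (\<lambda>x. ennreal (gauss_density C x))"

definition U01 :: "real measure" where
  "U01 = uniform_measure lborel {0..1}"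

definition ess_p :: "real^'d \<Rightarrow> real^'d \<Rightarrow> real \<Rightarrow> real^'d" where
  "ess_p x w \<theta> = cos \<theta> *\<^sub>R x + sin \<theta> *\<^sub>R w"

definition level_set :: "(real^'d \<Rightarrow> real) \<Rightarrow> real \<Rightarrow> (real^'d) set" where
  "level_set \<rho> t = {x. \<rho> x \<ge> t}"

text \<open>Randomness of one ESS transition: w ~ mu0, v ~ U[0,1] (so t = rho(x) v ~ U[0,rho(x)]),
  and an i.i.d. sequence u_0, u_1, ... ~ U[0,1] driving the angle draws.
  theta_0 = 2 pi u_0 ~ U[0,2pi]; a fresh draw theta ~ U[lo,hi] is lo + (hi - lo) u_{k+1}.\<close>
definition ess_space :: "real^'d^'d \<Rightarrow> ((real^'d) \<times> real \<times> (nat \<Rightarrow> real)) measure" where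
  "ess_space C = gauss_measure C \<Otimes>\<^sub>M (U01 \<Otimes>\<^sub>M (\<Pi>\<^sub>M k\<in>(UNIV::nat set). U01))"

fun ess_state :: "(nat \<Rightarrow> real) \<Rightarrow> nat \<Rightarrow> real \<times> real \<times> real" where
  "ess_state u 0 = (2 * pi * u 0, 2 * pi * u 0 - 2 * pi, 2 * pi * u 0)"
| "ess_state u (Suc k) =
     (let (\<theta>, lo, hi) = ess_state u k;
          lo' = (if \<theta> < 0 then \<theta> else lo);
          hi' = (if \<theta> < 0 then hi else \<theta>)
      in (lo' + (hi' - lo') * u (Suc k), lo', hi'))"

definition ess_theta :: "(nat \<Rightarrow> real) \<Rightarrow> nat \<Rightarrow> real" where
  "ess_theta u k = fst (ess_state u k)"

definition ess_hit :: "(real^'d \<Rightarrow> real) \<Rightarrow> real^'d \<Rightarrow> (real^'d) \<times> real \<times> (nat \<Rightarrow> real) \<Rightarrow> nat \<Rightarrow> bool" where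
  "ess_hit \<rho> x \<omega> k = (case \<omega> of (w, v, u) \<Rightarrow>
      ess_p x w (ess_theta u k) \<in> level_set \<rho> (\<rho> x * v))"

definition ess_output :: "(real^'d \<Rightarrow> real) \<Rightarrow> real^'d \<Rightarrow> (real^'d) \<times> real \<times> (nat \<Rightarrow> real) \<Rightarrow> real^'d" where
  "ess_output \<rho> x \<omega> = (case \<omega> of (w, v, u) \<Rightarrow>
      ess_p x w (ess_theta u (LEAST k. ess_hit \<rho> x \<omega> k)))"

text \<open>Transition kernel E(x,A): probability that the loop terminates and the output lies in A
  (the loop terminates almost surely, so this is the probability that the output lies in A).\<close>
definition ess_kernel :: "real^'d^'d \<Rightarrow> (real^'d \<Rightarrow> real) \<Rightarrow> real^'d \<Rightarrow> (real^'d) set \<Rightarrow> real" where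
  "ess_kernel C \<rho> x A =
     measure (ess_space C) {\<omega> \<in> space (ess_space C).
        (\<exists>k. ess_hit \<rho> x \<omega> k) \<and> ess_output \<rho> x \<omega> \<in> A}"

end

theory Submission imports Defs begin

lemma spd_inv:
  fixes C :: "real^'d^'d"
  assumes spd: "sym_pos_def_mat C"
  shows "C ** matrix_inv C = mat 1" "matrix_inv C ** C = mat 1"
proof -
  have ker: "\<forall>x. C *v x = 0 \<longrightarrow> x = 0"
    using spd unfolding sym_pos_def_mat_def by (metis inner_zero_right less_irrefl)
  then obtain B where B: "B ** C = mat 1" using matrix_left_invertible_ker by blast
  then have "C ** B = mat 1" using matrix_left_right_inverse by blast
  then have "\<exists>A'. C ** A' = mat 1 \<and> A' ** C = mat 1" using B by blast
  then have "C ** matrix_inv C = mat 1 \<and> matrix_inv C ** C = mat 1"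
    unfolding matrix_inv_def by (rule someI_ex)
  then show "C ** matrix_inv C = mat 1" "matrix_inv C ** C = mat 1" by auto
qed

lemma spd_qpos:
  fixes C :: "real^'d^'d"
  assumes spd: "sym_pos_def_mat C" and x: "x \<noteq> 0"
  shows "x \<bullet> (matrix_inv C *v x) > 0"
proof -
  define y where "y = matrix_inv C *v x"
  have Cy: "C *v y = x" unfolding y_def using spd_inv[OF spd]
    by (simp add: matrix_vector_mul_assoc)
  have "y \<noteq> 0" using Cy x by auto
  then have "y \<bullet> (C *v y) > 0" using spd unfolding sym_pos_def_mat_def by blast
  then show ?thesis using Cy by (simp add: y_def[symmetric] inner_commute)
qed

lemma spd_qbound:
  fixes C :: "real^'d^'d"
  assumes spd: "sym_pos_def_mat C"
  shows "\<exists>l>0. \<forall>x. l * (norm x)\<^sup>2 \<le> x \<bullet> (matrix_inv C *v x)"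
proof -
  let ?q = "\<lambda>x::real^'d. x \<bullet> (matrix_inv C *v x)"
  have cont: "continuous_on UNIV ?q"
    by (intro continuous_intros linear_continuous_on matrix_vector_mul_linear)
  have ne: "sphere (0::real^'d) 1 \<noteq> {}"
    by (simp add: sphere_eq_empty)
  obtain u where u: "u \<in> sphere 0 1" "\<forall>y\<in>sphere 0 1. ?q u \<le> ?q y"
    using continuous_attains_inf[OF compact_sphere ne continuous_on_subset[OF cont]] by blast
  have "u \<noteq> 0" using u by auto
  then have lpos: "?q u > 0" using spd_qpos[OF spd] by blast
  have "?q u * (norm x)\<^sup>2 \<le> ?q x" for x
  proof (cases "x = 0")
    case True then show ?thesis by simp
  next
    case False
    define z where "z = x /\<^sub>R norm x"
    have "z \<in> sphere 0 1" using False by (simp add: z_def)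
    then have "?q u \<le> ?q z" using u by blast
    moreover have "?q x = (norm x)\<^sup>2 * ?q z"
      using False by (simp add: z_def matrix_vector_mult_scaleR power2_eq_square field_simps)
    ultimately show ?thesis using False
      by (simp add: mult.commute)
  qed
  then show ?thesis using lpos by blast
qed


lemma spd_det: 
  fixes C :: "real^'d^'d"
  assumes spd: "sym_pos_def_mat C"
  shows "det C \<noteq> 0"
  using spd_inv(1)[OF spd] det_mul[of C "matrix_inv C"] by auto

lemma gauss_density_alt:
  "gauss_density C x = ((2 * pi) powr (- real CARD('d) / 2) * (det C) powr (- 1 / 2))
       * exp (- (x \<bullet> (matrix_inv C *v x)) / 2)" for C :: "real^'d^'d"
  by (simp add: gauss_density_def)

lemma gauss_K_pos:
  fixes C :: "real^'d^'d"
  assumes spd: "sym_pos_def_mat C"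
  shows "(2 * pi) powr (- real CARD('d) / 2) * (det C) powr (- 1 / 2) > 0"
  using spd_det[OF spd] by simp

lemma gauss_density_pos:
  fixes C :: "real^'d^'d"
  assumes spd: "sym_pos_def_mat C"
  shows "gauss_density C x > 0"
  using gauss_K_pos[OF spd] by (simp add: gauss_density_alt)

lemma gauss_density_cont:
  fixes C :: "real^'d^'d"
  shows "continuous_on UNIV (gauss_density C)"
  unfolding gauss_density_def[abs_def]
  by (intro continuous_intros linear_continuous_on matrix_vector_mul_linear) auto

lemma gauss_density_meas[measurable]:
  fixes C :: "real^'d^'d"
  shows "gauss_density C \<in> borel_measurable borel"
  by (rule borel_measurable_continuous_onI[OF gauss_density_cont])

lemma gauss_finite:
  fixes C :: "real^'d^'d"
  assumes spd: "sym_pos_def_mat C"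
  shows "emeasure (gauss_measure C) UNIV < \<infinity>"
proof -
  obtain l where l: "l > 0" "\<forall>x. l * (norm x)\<^sup>2 \<le> x \<bullet> (matrix_inv C *v x)"
    using spd_qbound[OF spd] by blast
  define K where "K = (2 * pi) powr (- real CARD('d) / 2) * (det C) powr (- 1 / 2)"
  have K: "K > 0" using gauss_K_pos[OF spd] by (simp add: K_def)
  define s where "s = 1 / sqrt l"
  have s: "s > 0" using l by (simp add: s_def)
  have nd: "exp (- l * t\<^sup>2 / 2) = sqrt (2 * pi * s\<^sup>2) * normal_density 0 s t" for t
    using s l by (simp add: normal_density_def s_def real_sqrt_divide power_divide)
  have le: "gauss_density C x \<le> K * (\<Prod>b\<in>Basis. exp (- l * (x \<bullet> b)\<^sup>2 / 2))" for x
  proof -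
    have "(norm x)\<^sup>2 = x \<bullet> x" by (rule power2_norm_eq_inner)
    also have "\<dots> = (\<Sum>b\<in>Basis. (x \<bullet> b) * (x \<bullet> b))" by (rule euclidean_inner)
    finally have nx: "(norm x)\<^sup>2 = (\<Sum>b\<in>Basis. (x \<bullet> b)\<^sup>2)" by (simp only: power2_eq_square)
    then have "(\<Prod>b\<in>Basis. exp (- l * (x \<bullet> b)\<^sup>2 / 2)) = exp (- l * (norm x)\<^sup>2 / 2)"
    proof -
      have "(\<Sum>b\<in>Basis. - l * (x \<bullet> b)\<^sup>2 / 2) = - l * (norm x)\<^sup>2 / 2"
        unfolding nx by (simp add: sum_distrib_right sum_negf sum_distrib_left)
      then show ?thesis by (simp add: exp_sum[symmetric])
    qed
    moreover have "exp (- (x \<bullet> (matrix_inv C *v x)) / 2) \<le> exp (- l * (norm x)\<^sup>2 / 2)"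
      using l(2)[rule_format, of x] by simp
    moreover have gx: "gauss_density C x = K * exp (- (x \<bullet> (matrix_inv C *v x)) / 2)"
      by (simp add: gauss_density_def K_def)
    ultimately show ?thesis using K by (simp add: mult_left_mono)
  qed
  have "emeasure (gauss_measure C) UNIV = (\<integral>\<^sup>+x. ennreal (gauss_density C x) \<partial>lborel)"
    unfolding gauss_measure_def by (simp add: emeasure_density)
  also have "\<dots> \<le> (\<integral>\<^sup>+(x::real^'d). ennreal K * (\<Prod>b\<in>Basis. ennreal (exp (- l * (x \<bullet> b)\<^sup>2 / 2))) \<partial>lborel)"
  proof (rule nn_integral_mono)
    fix x :: "real^'d"
    have "ennreal K * (\<Prod>b\<in>Basis. ennreal (exp (- l * (x \<bullet> b)\<^sup>2 / 2)))
        = ennreal (K * (\<Prod>b\<in>Basis. exp (- l * (x \<bullet> b)\<^sup>2 / 2)))"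
      using K by (simp add: prod_ennreal ennreal_mult prod_nonneg)
    then show "ennreal (gauss_density C x) \<le> ennreal K * (\<Prod>b\<in>Basis. ennreal (exp (- l * (x \<bullet> b)\<^sup>2 / 2)))"
      using le[of x] by (simp add: ennreal_leI)
  qed
  also have "\<dots> = ennreal K * (\<integral>\<^sup>+(x::real^'d). (\<Prod>b\<in>Basis. ennreal (exp (- l * (x \<bullet> b)\<^sup>2 / 2))) \<partial>lborel)"
    by (simp add: nn_integral_cmult)
  also have "(\<integral>\<^sup>+(x::real^'d). (\<Prod>b\<in>Basis. ennreal (exp (- l * (x \<bullet> b)\<^sup>2 / 2))) \<partial>lborel)
      = (\<Prod>b\<in>(Basis::(real^'d) set). (\<integral>\<^sup>+t. ennreal (exp (- l * t\<^sup>2 / 2)) \<partial>lborel))"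
    by (rule nn_integral_lborel_prod) auto
  also have "(\<integral>\<^sup>+t. ennreal (exp (- l * t\<^sup>2 / 2)) \<partial>lborel) = ennreal (sqrt (2 * pi * s\<^sup>2))"
  proof -
    have "(\<integral>\<^sup>+t. ennreal (exp (- l * t\<^sup>2 / 2)) \<partial>lborel)
        = (\<integral>\<^sup>+t. ennreal (sqrt (2 * pi * s\<^sup>2)) * ennreal (normal_density 0 s t) \<partial>lborel)"
      unfolding nd by (simp add: ennreal_mult)
    also have "\<dots> = ennreal (sqrt (2 * pi * s\<^sup>2)) * (\<integral>\<^sup>+t. ennreal (normal_density 0 s t) \<partial>lborel)"
      by (simp add: nn_integral_cmult)
    also have "(\<integral>\<^sup>+t. ennreal (normal_density 0 s t) \<partial>lborel) = 1"
      using prob_space.emeasure_space_1[OF prob_space_normal_density[OF s, of 0]]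
      by (simp add: emeasure_density)
    finally show ?thesis by simp
  qed
  finally have le2: "emeasure (gauss_measure C) UNIV \<le> ennreal K * ennreal (sqrt (2 * pi * s\<^sup>2)) ^ CARD('d)"
    by simp
  have "ennreal K * ennreal (sqrt (2 * pi * s\<^sup>2)) ^ CARD('d) = ennreal (K * sqrt (2 * pi * s\<^sup>2) ^ CARD('d))"
    using K by (simp add: ennreal_power ennreal_mult)
  then have "ennreal K * ennreal (sqrt (2 * pi * s\<^sup>2)) ^ CARD('d) < \<infinity>" by simp
  then show ?thesis using le2 by (rule le_less_trans[rotated])
qed


lemma gauss_lb_ball:
  fixes C :: "real^'d^'d"
  assumes spd: "sym_pos_def_mat C"
  shows "\<exists>\<delta>>0. \<forall>w\<in>cball 0 M. \<delta> \<le> gauss_density C w"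
proof (cases "M < 0")
  case True then show ?thesis by (intro exI[of _ 1]) auto
next
  case False
  then have ne: "cball (0::real^'d) M \<noteq> {}" by simp
  obtain u where u: "u \<in> cball 0 M" "\<forall>y\<in>cball 0 M. gauss_density C u \<le> gauss_density C y"
    using continuous_attains_inf[OF compact_cball ne continuous_on_subset[OF gauss_density_cont]] by blast
  then show ?thesis using gauss_density_pos[OF spd, of u] by blast
qed

lemma lborel_affine_preimage:
  fixes t :: "real^'d"
  assumes s: "s \<noteq> 0" and B: "B \<in> sets borel"
  shows "emeasure lborel B = ennreal (\<bar>s\<bar> ^ CARD('d)) * emeasure lborel {w. t + s *\<^sub>R w \<in> B}"
proof -
  have "emeasure lborel B = emeasure (density (distr lborel borel (\<lambda>x. t + s *\<^sub>R x)) (\<lambda>_. \<bar>s\<bar>^DIM(real^'d))) B"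
    using lborel_affine[OF s, of t] by simp
  also have "\<dots> = ennreal (\<bar>s\<bar> ^ CARD('d)) * emeasure (distr lborel borel (\<lambda>x. t + s *\<^sub>R x)) B"
    using B by (simp add: emeasure_density nn_integral_cmult)
  also have "emeasure (distr lborel borel (\<lambda>x. t + s *\<^sub>R x)) B = emeasure lborel {w. t + s *\<^sub>R w \<in> B}"
    using B by (simp add: emeasure_distr vimage_def)
  finally show ?thesis .
qed

lemma gauss_affine_lb:
  fixes C :: "real^'d^'d" and t :: "real^'d"
  assumes s: "0 < s" "s \<le> 1" and B: "B \<in> sets borel"
    and T: "{w. t + s *\<^sub>R w \<in> B} \<subseteq> cball 0 M"
    and \<delta>: "\<delta> \<ge> 0" "\<forall>w\<in>cball 0 M. \<delta> \<le> gauss_density C w"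
  shows "ennreal \<delta> * emeasure lborel B \<le> emeasure (gauss_measure C) {w. t + s *\<^sub>R w \<in> B}"
proof -
  let ?T = "{w. t + s *\<^sub>R w \<in> B}"
  have Tm: "?T \<in> sets borel" using B by measurable
  have "emeasure lborel B \<le> emeasure lborel ?T"
  proof -
    have "emeasure lborel B = ennreal (\<bar>s\<bar> ^ CARD('d)) * emeasure lborel ?T"
      using lborel_affine_preimage[of s B t] s B by simp
    also have "\<dots> \<le> 1 * emeasure lborel ?T"
      using s by (intro mult_right_mono) (auto simp: power_le_one)
    finally show ?thesis by simp
  qed
  then have "ennreal \<delta> * emeasure lborel B \<le> ennreal \<delta> * emeasure lborel ?T"
    by (intro mult_left_mono) auto
  also have "\<dots> = (\<integral>\<^sup>+w. ennreal \<delta> * indicator ?T w \<partial>lborel)"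
    using Tm by (simp add: nn_integral_cmult)
  also have "\<dots> \<le> (\<integral>\<^sup>+w. ennreal (gauss_density C w) * indicator ?T w \<partial>lborel)"
    using T \<delta> by (intro nn_integral_mono) (auto split: split_indicator intro!: ennreal_leI)
  also have "\<dots> = emeasure (gauss_measure C) ?T"
    using Tm unfolding gauss_measure_def by (simp add: emeasure_density)
  finally show ?thesis .
qed


lemma sets_U01[measurable_cong]: "sets U01 = sets borel"
  by (simp add: U01_def)

lemma sets_gauss[measurable_cong]: "sets (gauss_measure C) = sets borel"
  by (simp add: gauss_measure_def)

lemma ess_state_meas_aux:
  "(\<lambda>u. fst (ess_state u k)) \<in> borel_measurable (PiM UNIV (\<lambda>_. U01)) \<and>
   (\<lambda>u. fst (snd (ess_state u k))) \<in> borel_measurable (PiM UNIV (\<lambda>_. U01)) \<and>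
   (\<lambda>u. snd (snd (ess_state u k))) \<in> borel_measurable (PiM UNIV (\<lambda>_. U01))"
proof (induction k)
  case 0
  then show ?case by simp
next
  case (Suc k)
  then have [measurable]: "(\<lambda>u. fst (ess_state u k)) \<in> borel_measurable (PiM UNIV (\<lambda>_. U01))"
   "(\<lambda>u. fst (snd (ess_state u k))) \<in> borel_measurable (PiM UNIV (\<lambda>_. U01))"
   "(\<lambda>u. snd (snd (ess_state u k))) \<in> borel_measurable (PiM UNIV (\<lambda>_. U01))" by auto
  show ?case
    unfolding ess_state.simps Let_def case_prod_beta by simp measurable
qed

lemma ess_theta_meas[measurable]:
  "(\<lambda>u. ess_theta u k) \<in> borel_measurable (PiM UNIV (\<lambda>_. U01))"
  unfolding ess_theta_def using ess_state_meas_aux by blast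


lemma ess_hit_pred[measurable]:
  fixes \<rho> :: "real^'d \<Rightarrow> real" and C :: "real^'d^'d"
  assumes [measurable]: "\<rho> \<in> borel_measurable borel"
  shows "Measurable.pred (gauss_measure C \<Otimes>\<^sub>M (U01 \<Otimes>\<^sub>M (\<Pi>\<^sub>M k\<in>(UNIV::nat set). U01))) (\<lambda>\<omega>. ess_hit \<rho> x \<omega> k)"
  unfolding ess_hit_def case_prod_beta level_set_def ess_p_def
  by measurable

lemma S_eq:
  "{\<omega> \<in> space M. (\<exists>k. ess_hit \<rho> x \<omega> k) \<and> ess_output \<rho> x \<omega> \<in> A}
   = (\<Union>k. {\<omega> \<in> space M. ess_hit \<rho> x \<omega> k \<and> (\<forall>j<k. \<not> ess_hit \<rho> x \<omega> j)
        \<and> ess_p x (fst \<omega>) (ess_theta (snd (snd \<omega>)) k) \<in> A})"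
proof (intro equalityI subsetI)
  fix \<omega> assume "\<omega> \<in> {\<omega> \<in> space M. (\<exists>k. ess_hit \<rho> x \<omega> k) \<and> ess_output \<rho> x \<omega> \<in> A}"
  then have w: "\<omega> \<in> space M" "\<exists>k. ess_hit \<rho> x \<omega> k" "ess_output \<rho> x \<omega> \<in> A" by auto
  define n where "n = (LEAST k. ess_hit \<rho> x \<omega> k)"
  have "ess_hit \<rho> x \<omega> n" using w(2) unfolding n_def by (metis LeastI)
  moreover have "\<forall>j<n. \<not> ess_hit \<rho> x \<omega> j" unfolding n_def using not_less_Least by blast
  moreover have "ess_p x (fst \<omega>) (ess_theta (snd (snd \<omega>)) n) \<in> A"
    using w(3) unfolding ess_output_def n_def by (simp add: case_prod_beta)
  ultimately show "\<omega> \<in> (\<Union>k. {\<omega> \<in> space M. ess_hit \<rho> x \<omega> k \<and> (\<forall>j<k. \<not> ess_hit \<rho> x \<omega> j)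
        \<and> ess_p x (fst \<omega>) (ess_theta (snd (snd \<omega>)) k) \<in> A})" using w(1) by blast
next
  fix \<omega> assume "\<omega> \<in> (\<Union>k. {\<omega> \<in> space M. ess_hit \<rho> x \<omega> k \<and> (\<forall>j<k. \<not> ess_hit \<rho> x \<omega> j)
        \<and> ess_p x (fst \<omega>) (ess_theta (snd (snd \<omega>)) k) \<in> A})"
  then obtain k where k: "\<omega> \<in> space M" "ess_hit \<rho> x \<omega> k" "\<forall>j<k. \<not> ess_hit \<rho> x \<omega> j"
    "ess_p x (fst \<omega>) (ess_theta (snd (snd \<omega>)) k) \<in> A" by blast
  have L: "(LEAST k. ess_hit \<rho> x \<omega> k) = k"
    using k(2,3) by (intro Least_equality) (auto simp: not_less[symmetric])
  show "\<omega> \<in> {\<omega> \<in> space M. (\<exists>k. ess_hit \<rho> x \<omega> k) \<and> ess_output \<rho> x \<omega> \<in> A}"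
    using k L unfolding ess_output_def by (auto simp: case_prod_beta)
qed

lemma p_meas[measurable]:
  fixes C :: "real^'d^'d" and x :: "real^'d"
  shows "(\<lambda>\<omega>. ess_p x (fst \<omega>) (ess_theta (snd (snd \<omega>)) k)) \<in> borel_measurable (gauss_measure C \<Otimes>\<^sub>M (U01 \<Otimes>\<^sub>M (\<Pi>\<^sub>M k\<in>(UNIV::nat set). U01)))"
  unfolding ess_p_def by measurable

lemma S_meas:
  fixes \<rho> :: "real^'d \<Rightarrow> real" and C :: "real^'d^'d"
  assumes r[measurable]: "\<rho> \<in> borel_measurable borel" and A[measurable]: "A \<in> sets borel"
  shows "{\<omega> \<in> space (ess_space C). (\<exists>k. ess_hit \<rho> x \<omega> k) \<and> ess_output \<rho> x \<omega> \<in> A}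
     \<in> sets (ess_space C)"
proof -
  let ?M = "gauss_measure C \<Otimes>\<^sub>M (U01 \<Otimes>\<^sub>M (\<Pi>\<^sub>M k\<in>(UNIV::nat set). U01))"
  have h: "Measurable.pred ?M (\<lambda>\<omega>. ess_hit \<rho> x \<omega> k)" for k
    using ess_hit_pred[OF r] .
  have P1: "Measurable.pred ?M (\<lambda>\<omega>. \<forall>j\<in>{..<k}. \<not> ess_hit \<rho> x \<omega> j)" for k
    by (rule pred_intros_finite(3)[OF finite_lessThan]) (rule pred_intros_logic(2)[OF h])
  have P2: "Measurable.pred ?M (\<lambda>\<omega>. ess_p x (fst \<omega>) (ess_theta (snd (snd \<omega>)) k) \<in> A)" for k
    by (rule pred_sets2[OF A p_meas])
  define F where "F k = {\<omega> \<in> space ?M. ess_hit \<rho> x \<omega> k \<and> (\<forall>j<k. \<not> ess_hit \<rho> x \<omega> j)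
        \<and> ess_p x (fst \<omega>) (ess_theta (snd (snd \<omega>)) k) \<in> A}" for k
  have eqk: "F k = {\<omega> \<in> space ?M. ess_hit \<rho> x \<omega> k \<and> ((\<forall>j\<in>{..<k}. \<not> ess_hit \<rho> x \<omega> j)
        \<and> ess_p x (fst \<omega>) (ess_theta (snd (snd \<omega>)) k) \<in> A)}" for k
    unfolding F_def by auto
  have K: "F k \<in> sets ?M" for k
    unfolding eqk by (rule predE) (rule pred_intros_logic(3)[OF h pred_intros_logic(3)[OF P1 P2]])
  have "range F \<subseteq> sets ?M" by (rule image_subsetI) (rule K)
  then have "(\<Union>k. F k) \<in> sets ?M" by (rule sets.countable_UN)
  then show ?thesis unfolding S_eq ess_space_def F_def .
qed

lemma sin_half:
  assumes "pi/6 \<le> t" "t \<le> 5*pi/6"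
  shows "1/2 \<le> sin t"
proof (cases "t \<le> pi/2")
  case True
  then have "sin (pi/6) \<le> sin t" using assms by (intro sin_monotone_2pi_le) auto
  then show ?thesis by (simp add: sin_30)
next
  case False
  then have "sin (pi/6) \<le> sin (pi - t)" using assms by (intro sin_monotone_2pi_le) auto
  then show ?thesis by (simp add: sin_30)
qed

lemma ess_hit_alt:
  "ess_hit \<rho> x \<omega> k = (\<rho> x * fst (snd \<omega>) \<le> \<rho> (ess_p x (fst \<omega>) (ess_theta (snd (snd \<omega>)) k)))"
  by (simp add: ess_hit_def level_set_def case_prod_beta)


theorem lemma2:
  fixes C :: "real^'d^'d" and \<rho> :: "real^'d \<Rightarrow> real" and G :: "(real^'d) set"
  assumes "sym_pos_def_mat C"
    and "\<rho> \<in> borel_measurable borel"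
    and "\<forall>x. \<rho> x > 0"
    and "\<forall>K. compact K \<longrightarrow> (\<exists>a b. 0 < a \<and> (\<forall>x\<in>K. a \<le> \<rho> x \<and> \<rho> x \<le> b))"
    and "compact G"
  shows "\<exists>\<epsilon>>0. \<forall>x\<in>G. \<forall>A\<in>sets borel.
           ess_kernel C \<rho> x A \<ge> \<epsilon> * measure lborel (A \<inter> G)"
proof -
  note spd = assms(1) and rm[measurable] = assms(2) and rpos = assms(3)
  obtain a b where ab: "0 < a" "\<forall>x\<in>G. a \<le> \<rho> x \<and> \<rho> x \<le> b"
    using assms(4) assms(5) by blast
  define b' where "b' = max b a"
  have b': "b' > 0" "\<forall>x\<in>G. \<rho> x \<le> b'" using ab by (auto simp: b'_def)
  define c where "c = a / b'"
  have c: "0 < c" "c \<le> 1" using ab b' by (auto simp: c_def b'_def)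
  have cb: "b' * c = a" using b' by (simp add: c_def)
  have Gb: "bounded G" using assms(5) by (rule compact_imp_bounded)
  then obtain R where R: "0 < R" "\<forall>x\<in>G. norm x \<le> R" using bounded_pos by blast
  have Gm[measurable]: "G \<in> sets borel" using assms(5) by (simp add: compact_imp_closed borel_closed)
  obtain \<delta> where \<delta>: "\<delta> > 0" "\<forall>w\<in>cball 0 (4*R). \<delta> \<le> gauss_density C w"
    using gauss_lb_ball[OF spd] by blast
  define I where "I = {1/12..5/12::real}"
  define \<epsilon> where "\<epsilon> = \<delta> * c / 3"
  show ?thesis
  proof (intro exI[of _ \<epsilon>] conjI ballI)
    show "\<epsilon> > 0" using \<delta> c by (simp add: \<epsilon>_def)
  next
    fix x A assume x: "x \<in> G" and A[measurable]: "A \<in> sets (borel :: (real^'d) measure)"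
    define M2 where "M2 = U01 \<Otimes>\<^sub>M (\<Pi>\<^sub>M k\<in>(UNIV::nat set). U01)"
    define \<Omega> where "\<Omega> = ess_space C"
    have \<Omega>_eq: "\<Omega> = gauss_measure C \<Otimes>\<^sub>M M2" by (simp add: \<Omega>_def M2_def ess_space_def)
    have U01_prob: "prob_space U01" unfolding U01_def by (rule prob_space_uniform_measure) auto
    have PiM_prob: "prob_space (\<Pi>\<^sub>M k\<in>(UNIV::nat set). U01)" by (rule prob_space_PiM) (rule U01_prob)
    have M2_prob: "prob_space M2" unfolding M2_def by (intro prob_space_pair U01_prob PiM_prob)
    have gfin: "finite_measure (gauss_measure C)"
      using gauss_finite[OF spd] by (intro finite_measureI) (simp add: gauss_measure_def)
    interpret g: finite_measure "gauss_measure C" by (rule gfin)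
    interpret m2: prob_space M2 by (rule M2_prob)
    interpret pim: prob_space "\<Pi>\<^sub>M k\<in>(UNIV::nat set). U01" by (rule PiM_prob)
    interpret pf: pair_sigma_finite "gauss_measure C" M2 ..
    have \<Omega>fin: "finite_measure \<Omega>" unfolding \<Omega>_eq
      by (rule finite_measure_pair_measure) (auto intro: gfin m2.finite_measure_axioms)
    define S where "S = {\<omega> \<in> space (ess_space C). (\<exists>k. ess_hit \<rho> x \<omega> k) \<and> ess_output \<rho> x \<omega> \<in> A}"
    have S_sets: "S \<in> sets \<Omega>" unfolding S_def \<Omega>_def by (rule S_meas[OF rm A])
    define E0 where "E0 = {\<omega> \<in> space \<Omega>. fst (snd \<omega>) \<le> c \<and> snd (snd \<omega>) 0 \<in> I \<and>
        ess_p x (fst \<omega>) (2 * pi * snd (snd \<omega>) 0) \<in> A \<inter> G}"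
    have E0_sets: "E0 \<in> sets \<Omega>"
    proof -
      have f1: "(\<lambda>\<omega>. fst (snd \<omega>)) \<in> borel_measurable \<Omega>" unfolding \<Omega>_eq M2_def by measurable
      have f2: "(\<lambda>\<omega>. snd (snd \<omega>) 0) \<in> borel_measurable \<Omega>" unfolding \<Omega>_eq M2_def by measurable
      have f3: "(\<lambda>\<omega>. ess_p x (fst \<omega>) (2 * pi * snd (snd \<omega>) 0)) \<in> borel_measurable \<Omega>"
        using p_meas[where x=x and C=C and k=0] by (simp add: ess_theta_def \<Omega>_eq M2_def)
      have s1: "{..c} \<in> sets (borel :: real measure)" by simp
      have s2: "I \<in> sets (borel :: real measure)" by (simp add: I_def)
      have s3: "A \<inter> G \<in> sets (borel :: (real^'d) measure)" using A Gm by (rule sets.Int)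
      have "Measurable.pred \<Omega> (\<lambda>\<omega>. fst (snd \<omega>) \<in> {..c} \<and> (snd (snd \<omega>) 0 \<in> I \<and>
          ess_p x (fst \<omega>) (2 * pi * snd (snd \<omega>) 0) \<in> A \<inter> G))"
        by (rule pred_intros_logic(3)[OF pred_sets2[OF s1 f1] pred_intros_logic(3)[OF pred_sets2[OF s2 f2] pred_sets2[OF s3 f3]]])
      then show ?thesis unfolding E0_def pred_def by simp
    qed
    have E0_sub: "E0 \<subseteq> S"
    proof
      fix \<omega> assume w: "\<omega> \<in> E0"
      let ?p = "ess_p x (fst \<omega>) (ess_theta (snd (snd \<omega>)) 0)"
      have th: "ess_theta (snd (snd \<omega>)) 0 = 2 * pi * snd (snd \<omega>) 0" by (simp add: ess_theta_def)
      have pG: "?p \<in> A \<inter> G" using w unfolding E0_def th by auto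
      then have "a \<le> \<rho> ?p" using ab by auto
      moreover have "\<rho> x * fst (snd \<omega>) \<le> a"
      proof (cases "fst (snd \<omega>) \<le> 0")
        case True
        then have "\<rho> x * fst (snd \<omega>) \<le> 0" using rpos by (simp add: mult_nonneg_nonpos less_imp_le)
        then show ?thesis using ab by simp
      next
        case False
        have "\<rho> x * fst (snd \<omega>) \<le> b' * c"
          using False w b' x rpos unfolding E0_def by (intro mult_mono) (auto simp: less_imp_le)
        then show ?thesis using cb by simp
      qed
      ultimately have "ess_hit \<rho> x \<omega> 0" unfolding ess_hit_alt by linarith
      moreover have "\<omega> \<in> space (ess_space C)" using w unfolding E0_def \<Omega>_def by auto
      ultimately have "\<omega> \<in> {\<omega> \<in> space (ess_space C). ess_hit \<rho> x \<omega> 0 \<and> (\<forall>j<0. \<not> ess_hit \<rho> x \<omega> j)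
        \<and> ess_p x (fst \<omega>) (ess_theta (snd (snd \<omega>)) 0) \<in> A}" using pG by simp
      then show "\<omega> \<in> S" unfolding S_def S_eq by (rule UN_I[OF UNIV_I])
    qed
    define m where "m = measure lborel (A \<inter> G)"
    have m: "emeasure lborel (A \<inter> G) = ennreal m" "0 \<le> m"
    proof -
      have "bounded (A \<inter> G)" using Gb by (rule bounded_subset) auto
      then have "emeasure lborel (A \<inter> G) \<noteq> top" using emeasure_bounded_finite[of "A \<inter> G"] by simp
      then show "emeasure lborel (A \<inter> G) = ennreal m" unfolding m_def by (rule emeasure_eq_ennreal_measure)
      show "0 \<le> m" unfolding m_def by (rule measure_nonneg)
    qed
    define J where "J = {..c} \<times> {u \<in> space (\<Pi>\<^sub>M k\<in>(UNIV::nat set). U01). u 0 \<in> I}"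
    have J_sets: "J \<in> sets M2" unfolding J_def M2_def
    proof (rule pair_measureI)
      show "{..c} \<in> sets U01" by (simp add: sets_U01)
      have cm: "(\<lambda>u. u 0) \<in> measurable (\<Pi>\<^sub>M k\<in>(UNIV::nat set). U01) U01"
        by (rule measurable_component_singleton) simp
      have "I \<in> sets U01" by (simp add: sets_U01 I_def)
      from pred_sets2[OF this cm]
      show "{u \<in> space (\<Pi>\<^sub>M k\<in>(UNIV::nat set). U01). u 0 \<in> I} \<in> sets (\<Pi>\<^sub>M k\<in>(UNIV::nat set). U01)"
        by (simp add: pred_def)
    qed
    have pre: "ennreal (\<delta> * m) * indicator J y \<le> emeasure (gauss_measure C) ((\<lambda>w. (w, y)) -` E0)"
      if y: "y \<in> space M2" for y
    proof (cases "y \<in> J")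
      case False then show ?thesis by simp
    next
      case True
      define \<theta> where "\<theta> = 2 * pi * snd y 0"
      have yc: "fst y \<le> c" "snd y 0 \<in> I" using True by (auto simp: J_def)
      have th: "pi/6 \<le> \<theta>" "\<theta> \<le> 5*pi/6" using yc(2) by (auto simp: I_def \<theta>_def)
      have s: "1/2 \<le> sin \<theta>" "sin \<theta> \<le> 1" using sin_half[OF th] by auto
      have eq: "(\<lambda>w. (w, y)) -` E0 = {w. cos \<theta> *\<^sub>R x + sin \<theta> *\<^sub>R w \<in> A \<inter> G}"
        using y yc unfolding E0_def \<Omega>_eq
        by (auto simp: space_pair_measure ess_p_def gauss_measure_def \<theta>_def)
      have T: "{w. cos \<theta> *\<^sub>R x + sin \<theta> *\<^sub>R w \<in> A \<inter> G} \<subseteq> cball 0 (4*R)"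
      proof
        fix w assume "w \<in> {w. cos \<theta> *\<^sub>R x + sin \<theta> *\<^sub>R w \<in> A \<inter> G}"
        then have yG: "cos \<theta> *\<^sub>R x + sin \<theta> *\<^sub>R w \<in> G" by auto
        have "sin \<theta> * norm w = norm (sin \<theta> *\<^sub>R w)" using s by simp
        also have "\<dots> = norm ((cos \<theta> *\<^sub>R x + sin \<theta> *\<^sub>R w) - cos \<theta> *\<^sub>R x)" by simp
        also have "\<dots> \<le> norm (cos \<theta> *\<^sub>R x + sin \<theta> *\<^sub>R w) + norm (cos \<theta> *\<^sub>R x)" by (rule norm_triangle_ineq4)
        also have "\<dots> \<le> R + R"
        proof -
          have "norm (cos \<theta> *\<^sub>R x) = \<bar>cos \<theta>\<bar> * norm x" by simp
          also have "\<dots> \<le> 1 * R" using R x by (intro mult_mono) auto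
          finally have "norm (cos \<theta> *\<^sub>R x) \<le> R" by simp
          moreover have "norm (cos \<theta> *\<^sub>R x + sin \<theta> *\<^sub>R w) \<le> R" using R yG by blast
          ultimately show ?thesis by linarith
        qed
        finally have "sin \<theta> * norm w \<le> 2 * R" by simp
        moreover have "(1/2) * norm w \<le> sin \<theta> * norm w" using s by (intro mult_right_mono) auto
        ultimately show "w \<in> cball 0 (4*R)" by simp
      qed
      have "ennreal \<delta> * emeasure lborel (A \<inter> G) \<le> emeasure (gauss_measure C) {w. cos \<theta> *\<^sub>R x + sin \<theta> *\<^sub>R w \<in> A \<inter> G}"
        using s \<delta> T by (intro gauss_affine_lb) auto
      then show ?thesis using True \<delta> m by (simp add: eq ennreal_mult)
    qed
    have "emeasure \<Omega> E0 = (\<integral>\<^sup>+y. emeasure (gauss_measure C) ((\<lambda>w. (w, y)) -` E0) \<partial>M2)"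
      unfolding \<Omega>_eq by (rule pf.emeasure_pair_measure_alt2) (use E0_sets \<Omega>_eq in simp)
    also have "\<dots> \<ge> (\<integral>\<^sup>+y. ennreal (\<delta> * m) * indicator J y \<partial>M2)"
      by (intro nn_integral_mono pre)
    finally have low1: "ennreal (\<delta> * m) * emeasure M2 J \<le> emeasure \<Omega> E0"
      using J_sets by (simp add: nn_integral_cmult_indicator)
    have U01c: "emeasure U01 {..c} = ennreal c"
    proof -
      have "{0..1::real} \<inter> {..c} = {0..c}" using c by auto
      then show ?thesis using c unfolding U01_def by (simp add: divide_ennreal_def)
    qed
    have U01I: "emeasure U01 I = ennreal (1/3)"
    proof -
      have "{0..1::real} \<inter> I = {1/12..5/12}" by (auto simp: I_def)
      then show ?thesis unfolding U01_def by (simp add: I_def divide_ennreal_def)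
    qed
    have PiI: "emeasure (\<Pi>\<^sub>M k\<in>(UNIV::nat set). U01) {u \<in> space (\<Pi>\<^sub>M k\<in>(UNIV::nat set). U01). u 0 \<in> I} = ennreal (1/3)"
    proof -
      have "distr (\<Pi>\<^sub>M k\<in>(UNIV::nat set). U01) U01 (\<lambda>\<omega>. \<omega> 0) = U01"
        by (rule distr_PiM_component) (auto intro: U01_prob)
      then have "emeasure (distr (\<Pi>\<^sub>M k\<in>(UNIV::nat set). U01) U01 (\<lambda>\<omega>. \<omega> 0)) I = ennreal (1/3)"
        using U01I by simp
      moreover have "I \<in> sets U01" by (simp add: I_def sets_U01)
      ultimately show ?thesis by (subst (asm) emeasure_distr) (auto simp: vimage_def Int_def conj_commute)
    qed
    have M2J: "emeasure M2 J = ennreal c * ennreal (1/3)"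
    proof -
      have cm: "(\<lambda>u. u 0) \<in> measurable (\<Pi>\<^sub>M k\<in>(UNIV::nat set). U01) U01"
        by (rule measurable_component_singleton) simp
      have "I \<in> sets U01" by (simp add: sets_U01 I_def)
      from pred_sets2[OF this cm]
      have Is: "{u \<in> space (\<Pi>\<^sub>M k\<in>(UNIV::nat set). U01). u 0 \<in> I} \<in> sets (\<Pi>\<^sub>M k\<in>(UNIV::nat set). U01)"
        by (simp add: pred_def)
      have "{..c} \<in> sets U01" by (simp add: sets_U01)
      then show ?thesis unfolding M2_def J_def
        by (subst pim.emeasure_pair_measure_Times[OF _ Is]) (simp_all add: U01c PiI)
    qed
    have low: "ennreal (\<epsilon> * m) \<le> emeasure \<Omega> S"
    proof -
      have "ennreal (\<epsilon> * m) = ennreal (\<delta> * m) * (ennreal c * ennreal (1/3))"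
        using \<delta> c m by (simp add: \<epsilon>_def ennreal_mult[symmetric] mult_ac)
      also have "\<dots> \<le> emeasure \<Omega> E0" using low1 M2J by simp
      also have "\<dots> \<le> emeasure \<Omega> S" using E0_sub S_sets by (rule emeasure_mono)
      finally show ?thesis .
    qed
    have fin: "emeasure \<Omega> S < top"
      using finite_measure.emeasure_finite[OF \<Omega>fin, of S] by (simp add: top.not_eq_extremum)
    have "\<epsilon> * m = enn2real (ennreal (\<epsilon> * m))" using \<delta> c m by (simp add: \<epsilon>_def)
    also have "\<dots> \<le> enn2real (emeasure \<Omega> S)" using low fin by (rule enn2real_mono)
    also have "\<dots> = ess_kernel C \<rho> x A" by (simp add: ess_kernel_def measure_def \<Omega>_def S_def)
    finally show "\<epsilon> * measure lborel (A \<inter> G) \<le> ess_kernel C \<rho> x A" by (simp add: m_def)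
  qed
qed

end
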